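(* For every perturbation $(F_\epsilon)_{\epsilon>0}$ of a cellular automaton, the set $\mathcal{M}_{\mathrm{stable}}$ of stable measures is convex.
   Context: $\mathcal{A}$ finite; $\mathcal{M}(\mathcal{A}^{\mathbb{Z}})$ is the set of shift-invariant Borel probability measures with the weak topology. A perturbation of a CA $F$ (neighborhood $\mathcal{N}$, local rule $f$) is a family $(F_\epsilon)_{\epsilon>0}$ of probabilistic cellular automata with neighborhood $\mathcal{N}$ and local stochastic matrices $f_\epsilon$ satisfying $f_\epsilon(u,f(u))\ge1-\epsilon$; $F_\epsilon$ acts on measures via the kernel $F_\epsilon(x,[w]_U)=\prod_{i\in U}f_\epsilon(x_{i+\mathcal{N}},w_i)$. $\mathcal{M}_\epsilon$ is the set of $\mu\in\mathcal{M}(\mathcal{A}^{\mathbb{Z}})$ with $F_\epsilon\mu=\mu$. A measure $\nu$ is stable if there exists a family $(\pi_\epsilon)_{\epsilon>0}$ with $\pi_\epsilon\in\mathcal{M}_\epsilon$ and $\pi_\epsilon\to\nu$ weakly as $\epsilon\to0$; $\mathcal{M}_{\mathrm{stable}}$ is the set of stable measures. *)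

theory Defs
  imports "HOL-Probability.Probability"
begin

text \<open>Configuration space A^Z, with A the finite type 'a, as a measurable space:
  product sigma-algebra (= Borel sigma-algebra of the product of discrete topologies).\<close>
definition AZ :: "(int \<Rightarrow> 'a) measure" where
  "AZ = PiM UNIV (\<lambda>_. count_space UNIV)"

definition AZtop :: "(int \<Rightarrow> 'a) topology" where
  "AZtop = product_topology (\<lambda>_. discrete_topology UNIV) UNIV"

definition shift :: "(int \<Rightarrow> 'a) \<Rightarrow> (int \<Rightarrow> 'a)" where
  "shift x = (\<lambda>i. x (i + 1))"

definition Minv :: "(int \<Rightarrow> 'a::finite) measure set" where
  "Minv = {\<mu>. prob_space \<mu> \<and> sets \<mu> = sets AZ \<and> distr \<mu> AZ shift = \<mu>}"

definition pattern :: "int set \<Rightarrow> (int \<Rightarrow> 'a) \<Rightarrow> int \<Rightarrow> (int \<Rightarrow> 'a)" where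
  "pattern N x i = restrict (\<lambda>j. x (i + j)) N"

definition pca_kernel :: "int set \<Rightarrow> ((int \<Rightarrow> 'a) \<Rightarrow> 'a pmf) \<Rightarrow> (int \<Rightarrow> 'a) \<Rightarrow> (int \<Rightarrow> 'a) measure" where
  "pca_kernel N g x = PiM UNIV (\<lambda>i. measure_pmf (g (pattern N x i)))"

definition pca_apply :: "int set \<Rightarrow> ((int \<Rightarrow> 'a) \<Rightarrow> 'a pmf) \<Rightarrow> (int \<Rightarrow> 'a) measure \<Rightarrow> (int \<Rightarrow> 'a) measure" where
  "pca_apply N g \<mu> = bind \<mu> (pca_kernel N g)"

definition is_perturbation :: "int set \<Rightarrow> ((int \<Rightarrow> 'a) \<Rightarrow> 'a) \<Rightarrow> (real \<Rightarrow> (int \<Rightarrow> 'a) \<Rightarrow> 'a pmf) \<Rightarrow> bool" where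
  "is_perturbation N f fe \<longleftrightarrow> finite N \<and>
     (\<forall>\<epsilon>>0. \<forall>u \<in> PiE N (\<lambda>_. UNIV). pmf (fe \<epsilon> u) (f u) \<ge> 1 - \<epsilon>)"

definition Meps :: "int set \<Rightarrow> (real \<Rightarrow> (int \<Rightarrow> 'a::finite) \<Rightarrow> 'a pmf) \<Rightarrow> real \<Rightarrow> (int \<Rightarrow> 'a) measure set" where
  "Meps N fe \<epsilon> = {\<mu> \<in> Minv. pca_apply N (fe \<epsilon>) \<mu> = \<mu>}"

definition weak_conv_0 :: "(real \<Rightarrow> (int \<Rightarrow> 'a) measure) \<Rightarrow> (int \<Rightarrow> 'a) measure \<Rightarrow> bool" where
  "weak_conv_0 \<pi> \<nu> \<longleftrightarrow> (\<forall>h. continuous_map AZtop euclideanreal h \<longrightarrow>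
      ((\<lambda>\<epsilon>. \<integral>x. h x \<partial>(\<pi> \<epsilon>)) \<longlongrightarrow> (\<integral>x. h x \<partial>\<nu>)) (at_right 0))"

definition Mstable :: "int set \<Rightarrow> (real \<Rightarrow> (int \<Rightarrow> 'a::finite) \<Rightarrow> 'a pmf) \<Rightarrow> (int \<Rightarrow> 'a) measure set" where
  "Mstable N fe = {\<nu> \<in> Minv. \<exists>\<pi>. (\<forall>\<epsilon>>0. \<pi> \<epsilon> \<in> Meps N fe \<epsilon>) \<and> weak_conv_0 \<pi> \<nu>}"

definition mix :: "real \<Rightarrow> (int \<Rightarrow> 'a) measure \<Rightarrow> (int \<Rightarrow> 'a) measure \<Rightarrow> (int \<Rightarrow> 'a) measure" where
  "mix t \<mu> \<nu> = measure_of (space AZ) (sets AZ)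
     (\<lambda>E. ennreal t * emeasure \<mu> E + ennreal (1 - t) * emeasure \<nu> E)"

end

theory Submission
  imports Defs
begin

lemma space_AZ: "space AZ = UNIV"
  by (simp add: AZ_def space_PiM)

lemma sets_kernel: "sets (pca_kernel N g x) = sets AZ"
  unfolding pca_kernel_def AZ_def by (rule sets_PiM_cong) auto

lemma space_kernel: "space (pca_kernel N g x) = UNIV"
  unfolding pca_kernel_def by (simp add: space_PiM)

lemma prob_kernel: "prob_space (pca_kernel N g x)"
  unfolding pca_kernel_def by (intro prob_space_PiM prob_space_measure_pmf)

lemma pattern_meas:
  assumes "finite N"
  shows "(\<lambda>x. pattern N x j) \<in> measurable AZ (count_space (PiE N (\<lambda>_. (UNIV::'a::finite set))))"
proof -
  have cnt: "countable (PiE N (\<lambda>_. (UNIV::'a set)))"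
    using assms by (intro countable_finite finite_PiE) auto
  show ?thesis
  proof (subst measurable_count_space_eq_countable[OF cnt], intro conjI ballI Pi_I)
    fix x :: "int \<Rightarrow> 'a" show "pattern N x j \<in> PiE N (\<lambda>_. UNIV)" by (simp add: pattern_def)
  next
    fix u :: "int \<Rightarrow> 'a" assume u: "u \<in> PiE N (\<lambda>_. UNIV)"
    have "(\<lambda>x. pattern N x j) -` {u} \<inter> space AZ = {x \<in> space AZ. \<forall>k\<in>N. x (j + k) = u k}"
      using u by (auto simp: pattern_def space_AZ restrict_def PiE_def extensional_def fun_eq_iff)
    also have "\<dots> \<in> sets AZ"
      unfolding AZ_def using assms by measurable
    finally show "(\<lambda>x. pattern N x j) -` {u} \<inter> space AZ \<in> sets AZ" .
  qed
qed

lemma kernel_meas: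
  assumes "finite N"
  shows "pca_kernel N g \<in> measurable AZ (subprob_algebra (AZ::(int \<Rightarrow> 'a::finite) measure))"
proof (rule measurable_subprob_algebra_generated[where \<Omega>="PiE (UNIV::int set) (\<lambda>i. space (count_space (UNIV::'a set)))"
      and G="prod_algebra (UNIV::int set) (\<lambda>_. count_space (UNIV::'a set))"])
  show "sets AZ = sigma_sets (PiE (UNIV::int set) (\<lambda>i. space (count_space (UNIV::'a set)))) (prod_algebra (UNIV::int set) (\<lambda>_. count_space UNIV))"
    unfolding AZ_def by (rule sets_PiM)
  show "Int_stable (prod_algebra (UNIV::int set) (\<lambda>_. count_space (UNIV::'a set)))" by (rule Int_stable_prod_algebra)
  show "prod_algebra (UNIV::int set) (\<lambda>_. count_space (UNIV::'a set)) \<subseteq> Pow (PiE (UNIV::int set) (\<lambda>i. space (count_space (UNIV::'a set))))"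
    by (rule prod_algebra_sets_into_space)
  fix a show "subprob_space (pca_kernel N g a)" by (rule prob_space_imp_subprob_space[OF prob_kernel])
  show "sets (pca_kernel N g a) = sets AZ" by (rule sets_kernel)
next
  show "(\<lambda>a. emeasure (pca_kernel N g a) (PiE (UNIV::int set) (\<lambda>i. space (count_space (UNIV::'a set))))) \<in> borel_measurable AZ"
  proof -
    have "\<And>a. emeasure (pca_kernel N g a) (PiE (UNIV::int set) (\<lambda>i. space (count_space (UNIV::'a set)))) = 1"
      using prob_space.emeasure_space_1[OF prob_kernel] by (simp add: space_kernel)
    then show ?thesis by simp
  qed
next
  fix A assume A: "A \<in> prod_algebra (UNIV::int set) (\<lambda>_. count_space (UNIV::'a set))"
  then obtain J E where AJ: "A = prod_emb (UNIV::int set) (\<lambda>_. count_space (UNIV::'a set)) J (PiE J E)" and J: "finite J"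
    by (auto elim!: prod_algebraE)
  have eq: "emeasure (pca_kernel N g a) A = (\<Prod>i\<in>J. emeasure (measure_pmf (g (pattern N a i))) (E i))" for a
  proof -
    have "A = prod_emb (UNIV::int set) (\<lambda>i. measure_pmf (g (pattern N a i))) J (PiE J E)"
      unfolding AJ by (simp add: prod_emb_def)
    then show ?thesis unfolding pca_kernel_def
      using J by (simp add: emeasure_PiM_emb prob_space_measure_pmf)
  qed
  have m: "(\<lambda>a. emeasure (measure_pmf (g (pattern N a i))) (E i)) \<in> borel_measurable AZ" for i
    using measurable_compose[OF pattern_meas[OF assms, of i] borel_measurable_count_space[of "\<lambda>u. emeasure (measure_pmf (g u)) (E i)"]] by simp
  show "(\<lambda>a. emeasure (pca_kernel N g a) A) \<in> borel_measurable AZ"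
    unfolding eq by (intro borel_measurable_prod_ennreal m)
qed

definition mixB :: "real \<Rightarrow> (int \<Rightarrow> 'a) measure \<Rightarrow> (int \<Rightarrow> 'a) measure \<Rightarrow> (int \<Rightarrow> 'a) measure" where
  "mixB t \<mu> \<nu> = measure_pmf (bernoulli_pmf t) \<bind> (\<lambda>b. if b then \<mu> else \<nu>)"

lemma kB_meas:
  assumes "prob_space \<mu>" "sets \<mu> = sets AZ" "prob_space \<nu>" "sets \<nu> = sets AZ"
  shows "(\<lambda>b. if b then \<mu> else \<nu>) \<in> measurable (measure_pmf p) (subprob_algebra AZ)"
  using assms by (auto simp: space_subprob_algebra prob_space_imp_subprob_space)

lemma sets_mixB:
  assumes "prob_space \<mu>" "sets \<mu> = sets AZ" "prob_space \<nu>" "sets \<nu> = sets AZ"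
  shows "sets (mixB t \<mu> \<nu>) = sets AZ"
  unfolding mixB_def using assms by (subst sets_bind[where N=AZ]) auto

lemma emeasure_mixB:
  assumes "prob_space \<mu>" "sets \<mu> = sets AZ" "prob_space \<nu>" "sets \<nu> = sets AZ"
    and t: "0 \<le> t" "t \<le> 1" and A: "A \<in> sets AZ"
  shows "emeasure (mixB t \<mu> \<nu>) A = ennreal t * emeasure \<mu> A + ennreal (1 - t) * emeasure \<nu> A"
  unfolding mixB_def
  using t by (subst emeasure_bind[OF _ kB_meas[OF assms(1-4)] A]) (auto simp: mult.commute)

lemma mix_eq:
  assumes "prob_space \<mu>" "sets \<mu> = sets AZ" "prob_space \<nu>" "sets \<nu> = sets AZ"
    and t: "0 \<le> t" "t \<le> 1"
  shows "mix t \<mu> \<nu> = mixB t \<mu> \<nu>"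
proof -
  have sp: "space (mixB t \<mu> \<nu>) = space AZ"
    using sets_mixB[OF assms(1-4)] by (rule sets_eq_imp_space_eq)
  have "mix t \<mu> \<nu> = measure_of (space (mixB t \<mu> \<nu>)) (sets (mixB t \<mu> \<nu>)) (emeasure (mixB t \<mu> \<nu>))"
    unfolding mix_def sp sets_mixB[OF assms(1-4)]
    by (rule measure_of_eq[OF sets.space_closed]) (simp add: sets.sigma_sets_eq emeasure_mixB[OF assms])
  then show ?thesis by (simp add: measure_of_of_measure)
qed

lemma prob_mixB:
  assumes "prob_space \<mu>" "sets \<mu> = sets AZ" "prob_space \<nu>" "sets \<nu> = sets AZ"
  and t: "0 \<le> t" "t \<le> 1"
  shows "prob_space (mixB t \<mu> \<nu>)"
proof (rule prob_spaceI)
  have sp: "space (mixB t \<mu> \<nu>) = space AZ"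
    using sets_mixB[OF assms(1-4)] by (rule sets_eq_imp_space_eq)
  have "space \<mu> = space AZ" "space \<nu> = space AZ" using assms(2,4) sets_eq_imp_space_eq by blast+
  then have "emeasure \<mu> (space AZ) = 1" "emeasure \<nu> (space AZ) = 1"
    using assms prob_space.emeasure_space_1 by metis+
  then show "emeasure (mixB t \<mu> \<nu>) (space (mixB t \<mu> \<nu>)) = 1"
    unfolding sp using t
    by (subst emeasure_mixB[OF assms]) (auto simp flip: ennreal_plus)
qed

lemma shift_meas: "shift \<in> measurable AZ AZ"
  unfolding shift_def AZ_def
  by (rule measurable_PiM_single') (auto simp: space_PiM)

lemma distr_mixB:
  assumes "prob_space \<mu>" "sets \<mu> = sets AZ" "prob_space \<nu>" "sets \<nu> = sets AZ"
  shows "distr (mixB t \<mu> \<nu>) AZ shift = mixB t (distr \<mu> AZ shift) (distr \<nu> AZ shift)"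
  unfolding mixB_def
  by (subst distr_bind[OF kB_meas[OF assms] _ shift_meas]) (auto intro!: bind_cong)

lemma bind_mixB:
  assumes "prob_space \<mu>" "sets \<mu> = sets AZ" "prob_space \<nu>" "sets \<nu> = sets AZ"
    and K: "K \<in> measurable AZ (subprob_algebra AZ)"
  shows "bind (mixB t \<mu> \<nu>) K = mixB t (bind \<mu> K) (bind \<nu> K)"
  unfolding mixB_def
  by (subst bind_assoc[OF kB_meas[OF assms(1-4)] K]) (auto intro!: bind_cong)

lemma integral_mixB:
  fixes h :: "(int \<Rightarrow> 'a) \<Rightarrow> real"
  assumes "prob_space \<mu>" "sets \<mu> = sets AZ" "prob_space \<nu>" "sets \<nu> = sets AZ"
    and t: "0 \<le> t" "t \<le> 1"
    and hm: "h \<in> borel_measurable AZ" and hb: "\<And>x. \<bar>h x\<bar> \<le> B"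
  shows "(\<integral>x. h x \<partial>mixB t \<mu> \<nu>) = t * (\<integral>x. h x \<partial>\<mu>) + (1 - t) * (\<integral>x. h x \<partial>\<nu>)"
proof -
  have "(\<integral>x. h x \<partial>mixB t \<mu> \<nu>) = (\<integral>b. (\<integral>x. h x \<partial>(if b then \<mu> else \<nu>)) \<partial>measure_pmf (bernoulli_pmf t))"
    unfolding mixB_def
  proof (rule integral_bind[OF hm hb kB_meas[OF assms(1-4)]])
    show "finite_measure (measure_pmf (bernoulli_pmf t))" by (rule prob_space.finite_measure) (rule prob_space_measure_pmf)
    show "AE x in measure_pmf (bernoulli_pmf t). emeasure (if x then \<mu> else \<nu>) (space (if x then \<mu> else \<nu>)) \<le> ennreal 1"
      using prob_space.emeasure_space_1[OF assms(1)] prob_space.emeasure_space_1[OF assms(3)]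
      by (intro AE_I2) auto
  qed
  also have "\<dots> = t * (\<integral>x. h x \<partial>\<mu>) + (1 - t) * (\<integral>x. h x \<partial>\<nu>)"
    using t by (simp add: mult.commute)
  finally show ?thesis .
qed

lemma cont_bounded:
  assumes "continuous_map AZtop euclideanreal (h :: (int \<Rightarrow> 'a::finite) \<Rightarrow> real)"
  shows "\<exists>B. \<forall>x. \<bar>h x\<bar> \<le> B"
proof -
  have cs: "compact_space (AZtop :: (int \<Rightarrow> 'a) topology)"
    unfolding AZtop_def by (simp add: compact_space_product_topology compact_space_discrete_topology)
  have tp: "topspace (AZtop :: (int \<Rightarrow> 'a) topology) = UNIV"
    unfolding AZtop_def by (simp add: topspace_product_topology)
  have "compactin euclideanreal (h ` topspace AZtop)"
    using image_compactin[OF cs[unfolded compact_space_def] assms] .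
  then have "compact (range h)" using tp by simp
  then have "bounded (range h)" by (rule compact_imp_bounded)
  then show ?thesis by (metis bounded_real rangeI)
qed

lemma mix_Minv:
  assumes "\<mu> \<in> Minv" "\<nu> \<in> Minv" "0 \<le> t" "t \<le> 1"
  shows "mix t \<mu> \<nu> \<in> Minv"
proof -
  have a: "prob_space \<mu>" "sets \<mu> = sets AZ" "prob_space \<nu>" "sets \<nu> = sets AZ"
    and d: "distr \<mu> AZ shift = \<mu>" "distr \<nu> AZ shift = \<nu>" using assms by (auto simp: Minv_def)
  show ?thesis unfolding mix_eq[OF a assms(3,4)] Minv_def
    using prob_mixB[OF a assms(3,4)] sets_mixB[OF a] distr_mixB[OF a] d by simp
qed

lemma mix_Meps:
  assumes "finite N" "\<mu> \<in> Meps N fe e" "\<nu> \<in> Meps N fe e" "0 \<le> t" "t \<le> 1"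
  shows "mix t \<mu> \<nu> \<in> Meps N fe e"
proof -
  have m: "\<mu> \<in> Minv" "\<nu> \<in> Minv" and p: "pca_apply N (fe e) \<mu> = \<mu>" "pca_apply N (fe e) \<nu> = \<nu>"
    using assms by (auto simp: Meps_def)
  have a: "prob_space \<mu>" "sets \<mu> = sets AZ" "prob_space \<nu>" "sets \<nu> = sets AZ"
    using m by (auto simp: Minv_def)
  show ?thesis
    using mix_Minv[OF m assms(4,5)] p bind_mixB[OF a kernel_meas[OF assms(1)]]
    unfolding Meps_def pca_apply_def mix_eq[OF a assms(4,5)] by simp
qed

lemma weak_mix:
  assumes w1: "weak_conv_0 \<pi>1 \<nu>1" and w2: "weak_conv_0 \<pi>2 \<nu>2"
    and m1: "\<And>e. e > 0 \<Longrightarrow> \<pi>1 e \<in> Minv" and m2: "\<And>e. e > 0 \<Longrightarrow> \<pi>2 e \<in> Minv"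
    and n: "\<nu>1 \<in> Minv" "\<nu>2 \<in> Minv" and t: "0 \<le> t" "t \<le> 1"
  shows "weak_conv_0 (\<lambda>e. mix t (\<pi>1 e) (\<pi>2 e)) (mix t \<nu>1 \<nu>2)"
  unfolding weak_conv_0_def
proof (intro allI impI)
  fix h :: "(int \<Rightarrow> 'a) \<Rightarrow> real"
  assume hc: "continuous_map AZtop euclideanreal h"
  have ev: "eventually (\<lambda>e. e > (0::real)) (at_right 0)" by (simp add: eventually_at_right_less)
  show "((\<lambda>e. \<integral>x. h x \<partial>mix t (\<pi>1 e) (\<pi>2 e)) \<longlongrightarrow> (\<integral>x. h x \<partial>mix t \<nu>1 \<nu>2)) (at_right 0)"
  proof (cases "h \<in> borel_measurable AZ")
    case True
    obtain B where hb: "\<And>x. \<bar>h x\<bar> \<le> B" using cont_bounded[OF hc] by blast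
    have I: "(\<integral>x. h x \<partial>mix t \<mu> \<nu>) = t * (\<integral>x. h x \<partial>\<mu>) + (1 - t) * (\<integral>x. h x \<partial>\<nu>)"
      if "\<mu> \<in> Minv" "\<nu> \<in> Minv" for \<mu> \<nu>
    proof -
      have a: "prob_space \<mu>" "sets \<mu> = sets AZ" "prob_space \<nu>" "sets \<nu> = sets AZ"
        using that by (auto simp: Minv_def)
      show ?thesis unfolding mix_eq[OF a t] by (rule integral_mixB[OF a t True hb])
    qed
    have "((\<lambda>e. t * (\<integral>x. h x \<partial>\<pi>1 e) + (1 - t) * (\<integral>x. h x \<partial>\<pi>2 e)) \<longlongrightarrow>
           t * (\<integral>x. h x \<partial>\<nu>1) + (1 - t) * (\<integral>x. h x \<partial>\<nu>2)) (at_right 0)"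
      using w1 w2 hc unfolding weak_conv_0_def by (intro tendsto_intros) auto
    then show ?thesis
      unfolding I[OF n]
      by (rule Lim_transform_eventually) (rule eventually_mono[OF ev], simp add: I m1 m2)
  next
    case False
    have z: "(\<integral>x. h x \<partial>\<mu>) = 0" if "\<mu> \<in> Minv" for \<mu> :: "(int \<Rightarrow> 'a) measure"
    proof (rule not_integrable_integral_eq)
      have "sets \<mu> = sets AZ" using that by (simp add: Minv_def)
      then have "h \<notin> borel_measurable \<mu>" using False measurable_cong_sets by blast
      then show "\<not> integrable \<mu> h" by auto
    qed
    show ?thesis
      unfolding z[OF mix_Minv[OF n t]]
      by (rule Lim_transform_eventually[OF tendsto_const]) (rule eventually_mono[OF ev], simp add: z mix_Minv m1 m2 t)
  qed
qed

theorem mainTheorem8: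
  fixes N :: "int set" and f :: "(int \<Rightarrow> 'a::finite) \<Rightarrow> 'a"
    and fe :: "real \<Rightarrow> (int \<Rightarrow> 'a) \<Rightarrow> 'a pmf"
  assumes "is_perturbation N f fe"
  shows "\<forall>\<nu>1 \<in> Mstable N fe. \<forall>\<nu>2 \<in> Mstable N fe. \<forall>t \<in> {0..1::real}.
           mix t \<nu>1 \<nu>2 \<in> Mstable N fe"
proof (intro ballI)
  fix \<nu>1 \<nu>2 t
  assume a1: "\<nu>1 \<in> Mstable N fe" and a2: "\<nu>2 \<in> Mstable N fe" and t: "t \<in> {0..1::real}"
  have fin: "finite N" using assms by (simp add: is_perturbation_def)
  from a1 obtain \<pi>1 where n1: "\<nu>1 \<in> Minv" and p1: "\<forall>\<epsilon>>0. \<pi>1 \<epsilon> \<in> Meps N fe \<epsilon>" and w1: "weak_conv_0 \<pi>1 \<nu>1"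
    by (auto simp: Mstable_def)
  from a2 obtain \<pi>2 where n2: "\<nu>2 \<in> Minv" and p2: "\<forall>\<epsilon>>0. \<pi>2 \<epsilon> \<in> Meps N fe \<epsilon>" and w2: "weak_conv_0 \<pi>2 \<nu>2"
    by (auto simp: Mstable_def)
  have t01: "0 \<le> t" "t \<le> 1" using t by auto
  have m1: "\<And>e. e > 0 \<Longrightarrow> \<pi>1 e \<in> Minv" using p1 by (auto simp: Meps_def)
  have m2: "\<And>e. e > 0 \<Longrightarrow> \<pi>2 e \<in> Minv" using p2 by (auto simp: Meps_def)
  show "mix t \<nu>1 \<nu>2 \<in> Mstable N fe"
    unfolding Mstable_def
  proof (intro CollectI conjI exI)
    show "mix t \<nu>1 \<nu>2 \<in> Minv" by (rule mix_Minv[OF n1 n2 t01])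
    show "\<forall>\<epsilon>>0. mix t (\<pi>1 \<epsilon>) (\<pi>2 \<epsilon>) \<in> Meps N fe \<epsilon>"
      using p1 p2 mix_Meps[OF fin _ _ t01] by blast
    show "weak_conv_0 (\<lambda>\<epsilon>. mix t (\<pi>1 \<epsilon>) (\<pi>2 \<epsilon>)) (mix t \<nu>1 \<nu>2)"
      by (rule weak_mix[OF w1 w2 m1 m2 n1 n2 t01])
  qed
qed

end
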